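(* Let $\arctan$ be the principal branch of the inverse tangent with $\arctan0=0$. For $|z-1|<1$, \[ \frac{\arctan z-\frac{\pi}{4}}{z}=\sum_{n=1}^{\infty}(-1)^nT(n)(z-1)^n, \] where $T(n)=\sum_{k=1}^{n}\frac{(-1)^k}{2^{k/2}k}\sin\frac{3k\pi}{4}$ for $n\ge1$. *)

theory Defs
  imports "HOL-Analysis.Analysis"
begin

definition T :: "nat \<Rightarrow> real" where
  "T n = (\<Sum>k=1..n. (-1)^k / (2 powr (real k / 2) * real k) * sin (3 * real k * pi / 4))"

end

theory Submission
  imports Defs
begin

definition tt :: "nat \<Rightarrow> real" where
  "tt k = (-1)^k / (2 powr (real k / 2) * real k) * sin (3 * real k * pi / 4)"

lemma T_eq: "T n = (\<Sum>k\<le>n. tt k)"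
proof -
  have "(\<Sum>k\<le>n. tt k) = (\<Sum>k\<in>insert 0 {1..n}. tt k)"
    by (rule sum.cong) auto
  also have "\<dots> = (\<Sum>k=1..n. tt k)" by (simp add: tt_def)
  finally show ?thesis by (simp add: T_def tt_def)
qed

lemma tt_alt: "tt k = - sin (real k * pi / 4) / (sqrt 2 ^ k * real k)"
proof -
  have p: "2 powr (real k / 2) = sqrt 2 ^ k"
    by (simp add: powr_half_sqrt[symmetric] powr_realpow[symmetric] powr_powr)
  have e: "3 * real k * pi / 4 = real k * pi - real k * pi / 4" by (simp add: field_simps)
  have "sin (3 * real k * pi / 4) = sin (real k * pi - real k * pi / 4)"
    by (subst e) (rule refl)
  also have "\<dots> = - ((-1)^k * sin (real k * pi / 4))"
    by (simp only: sin_diff sin_npi cos_npi)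
  finally have s: "sin (3 * real k * pi / 4) = - ((-1)^k * sin (real k * pi / 4))" .
  show ?thesis unfolding tt_def p s by (simp add: power_mult_distrib[symmetric])
qed

definition c1 :: complex where "c1 = (1 - \<i>) / 2"
definition c2 :: complex where "c2 = (1 + \<i>) / 2"

lemma c2_rcis: "c2 = rcis (1 / sqrt 2) (pi / 4)"
  by (simp add: c2_def rcis_def cis.ctr cos_45 sin_45 complex_eq_iff field_simps)
lemma c1_rcis: "c1 = rcis (1 / sqrt 2) (- (pi / 4))"
  by (simp add: c1_def rcis_def cis.ctr cos_45 sin_45 complex_eq_iff field_simps)

lemma coef: "\<i> / 2 * (c2 ^ i - c1 ^ i) / of_nat i = complex_of_real (tt i)"
proof -
  have "c2 ^ i - c1 ^ i = rcis ((1 / sqrt 2) ^ i) (real i * (pi/4)) - rcis ((1 / sqrt 2) ^ i) (real i * - (pi/4))"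
    unfolding c2_rcis c1_rcis DeMoivre2 by simp
  also have "\<dots> = 2 * \<i> * of_real (sin (real i * pi / 4) / sqrt 2 ^ i)"
    by (simp add: rcis_def cis.ctr complex_eq_iff power_divide field_simps)
  finally show ?thesis unfolding tt_alt by (simp add: complex_eq_iff)
qed

lemma norm_c1: "cmod c1 = 1 / sqrt 2" by (simp add: c1_rcis)
lemma norm_c2: "cmod c2 = 1 / sqrt 2" by (simp add: c2_rcis)

lemma Re_pos: assumes "cmod w < 1" "cmod c = 1 / sqrt 2" shows "Re (1 + c * w) > 0"
proof -
  have "cmod (c * w) < 1" using assms
    by (simp add: norm_mult) (smt (verit, best) mult_less_cancel_left2 norm_ge_zero real_sqrt_ge_one one_le_numeral)
  hence "\<bar>Re (c * w)\<bar> < 1" using abs_Re_le_cmod le_less_trans by blast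
  thus ?thesis by simp
qed

lemma arctan_eq:
  assumes w: "cmod w < 1"
  shows "Arctan (1 + w) - of_real pi / 4 = \<i> / 2 * (Ln (1 + c1 * w) - Ln (1 + c2 * w))"
proof -
  define F where "F x = Arctan (1 + x) - \<i> / 2 * (Ln (1 + c1 * x) - Ln (1 + c2 * x))" for x
  have "\<exists>c. \<forall>x\<in>ball 0 1. F x = c"
  proof (rule has_field_derivative_zero_constant)
    fix x :: complex assume "x \<in> ball 0 1"
    hence x: "cmod x < 1" by simp
    have r1: "Re (1 + c1 * x) > 0" by (rule Re_pos[OF x norm_c1])
    have r2: "Re (1 + c2 * x) > 0" by (rule Re_pos[OF x norm_c2])
    have n1: "1 + c1 * x \<noteq> 0" using r1 by (metis zero_complex.simps(1) less_irrefl)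
    have n2: "1 + c2 * x \<noteq> 0" using r2 by (metis zero_complex.simps(1) less_irrefl)
    have id: "1 + (1 + x)^2 = 2 * (1 + c1 * x) * (1 + c2 * x)"
    proof -
      have a: "c1 + c2 = 1" by (simp add: c1_def c2_def field_simps)
      have b: "c1 * c2 = 1/2" by (simp add: c1_def c2_def field_simps complex_eq_iff)
      have "2 * (1 + c1 * x) * (1 + c2 * x) = 2 + 2*(c1+c2)*x + 2*(c1*c2)*x*x" by algebra
      thus ?thesis unfolding a b by (simp add: power2_eq_square algebra_simps)
    qed
    have rx: "Re (1 + x) > 0" using abs_Re_le_cmod[of x] x by simp
    have dA: "((\<lambda>x. Arctan (1 + x)) has_field_derivative inverse (1 + (1 + x)^2) * 1) (at x)"
      by (rule DERIV_chain2[OF has_field_derivative_Arctan]) (use rx in \<open>auto intro!: derivative_eq_intros\<close>)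
    have dL1: "((\<lambda>x. Ln (1 + c1 * x)) has_field_derivative inverse (1 + c1 * x) * (0 + c1 * 1)) (at x)"
      by (rule DERIV_chain2[OF has_field_derivative_Ln]) (use r1 in \<open>auto simp: complex_nonpos_Reals_iff intro!: derivative_eq_intros\<close>)
    have dL2: "((\<lambda>x. Ln (1 + c2 * x)) has_field_derivative inverse (1 + c2 * x) * (0 + c2 * 1)) (at x)"
      by (rule DERIV_chain2[OF has_field_derivative_Ln]) (use r2 in \<open>auto simp: complex_nonpos_Reals_iff intro!: derivative_eq_intros\<close>)
    have "(F has_field_derivative (inverse (1 + (1 + x)^2) * 1 - \<i> / 2 * (inverse (1 + c1 * x) * (0 + c1 * 1) - inverse (1 + c2 * x) * (0 + c2 * 1)))) (at x)"
      unfolding F_def by (intro DERIV_diff DERIV_cmult dA dL1 dL2)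
    moreover have "inverse (1 + (1 + x)^2) * 1 - \<i> / 2 * (inverse (1 + c1 * x) * (0 + c1 * 1) - inverse (1 + c2 * x) * (0 + c2 * 1)) = 0"
    proof -
      have e: "inverse (1 + c1 * x) * c1 - inverse (1 + c2 * x) * c2 = (c1 - c2) / ((1 + c1 * x) * (1 + c2 * x))"
        using n1 n2 by (simp add: field_simps)
      have d: "c1 - c2 = - \<i>" by (simp add: c1_def c2_def field_simps)
      show ?thesis unfolding id mult_1_right add_0_left e d using n1 n2 by (simp add: field_simps)
    qed
    ultimately show "(F has_field_derivative 0) (at x within ball 0 1)"
      by (metis has_field_derivative_at_within)
  qed simp
  then obtain c where c: "\<And>x. x \<in> ball 0 1 \<Longrightarrow> F x = c" by blast
  have "F 0 = of_real pi / 4"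
    using Arctan_of_real[of 1] by (simp add: F_def arctan_one)
  hence "F w = of_real pi / 4" using c[of 0] c[of w] w by simp
  hence "Arctan (1 + w) - of_real pi / 4 = Arctan (1 + w) - F w" by simp
  thus ?thesis by (simp add: F_def)
qed

lemma norm_cw: assumes "cmod w < 1" "cmod c = 1 / sqrt 2" shows "cmod (c * w) < 1"
  using assms
  by (simp add: norm_mult) (smt (verit, best) mult_less_cancel_left2 norm_ge_zero real_sqrt_ge_one one_le_numeral)

lemma series_a:
  assumes w: "cmod w < 1"
  shows "(\<lambda>n. (-1)^n * complex_of_real (tt n) * w^n) sums (Arctan (1 + w) - of_real pi / 4)"
proof -
  have s1: "(\<lambda>n. - ((-(c1*w))^n) / of_nat n) sums Ln (1 + c1*w)"
    by (rule Ln_series'[OF norm_cw[OF w norm_c1]])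
  have s2: "(\<lambda>n. - ((-(c2*w))^n) / of_nat n) sums Ln (1 + c2*w)"
    by (rule Ln_series'[OF norm_cw[OF w norm_c2]])
  have "(\<lambda>n. \<i>/2 * (- ((-(c1*w))^n) / of_nat n - - ((-(c2*w))^n) / of_nat n)) sums (\<i>/2 * (Ln (1 + c1*w) - Ln (1 + c2*w)))"
    by (intro sums_mult sums_diff s1 s2)
  moreover have "\<i>/2 * (- ((-(c1*w))^n) / of_nat n - - ((-(c2*w))^n) / of_nat n) = (-1)^n * complex_of_real (tt n) * w^n" for n
  proof -
    have "\<i>/2 * (- ((-(c1*w))^n) / of_nat n - - ((-(c2*w))^n) / of_nat n) = (-1)^n * (\<i> / 2 * (c2 ^ n - c1 ^ n) / of_nat n) * w^n"
      by (simp add: power_minus' power_mult_distrib algebra_simps diff_divide_distrib)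
    thus ?thesis by (simp only: coef)
  qed
  ultimately show ?thesis unfolding arctan_eq[OF w] by (simp only:)
qed

lemma tt_bound: "\<bar>tt n\<bar> \<le> 1"
proof (cases "n = 0")
  case True thus ?thesis by (simp add: tt_def)
next
  case False
  have d: "sqrt 2 ^ n * real n \<ge> 1"
    using False by (metis mult_mono' one_le_power real_sqrt_ge_one one_le_numeral mult_1_right of_nat_0_le_iff zero_le_one
       less_one not_less of_nat_1 of_nat_le_iff)
  have "\<bar>tt n\<bar> = \<bar>sin (real n * pi / 4)\<bar> / (sqrt 2 ^ n * real n)"
    unfolding tt_alt using d by simp
  also have "\<dots> \<le> 1 / (sqrt 2 ^ n * real n)"
    using d by (intro divide_right_mono) auto
  also have "\<dots> \<le> 1" using d by simp
  finally show ?thesis .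
qed

theorem corollary3p1:
  fixes z :: complex
  assumes "cmod (z - 1) < 1"
  shows "(\<lambda>n. (-1) ^ (n + 1) * complex_of_real (T (n + 1)) * (z - 1) ^ (n + 1))
           sums ((Arctan z - complex_of_real pi / 4) / z)"
proof -
  define w where "w = z - 1"
  have w: "cmod w < 1" using assms by (simp add: w_def)
  have z: "z = 1 + w" by (simp add: w_def)
  define a where "a n = (-1)^n * complex_of_real (tt n) * w^n" for n
  define b where "b n = (-w)^n" for n
  have sa: "a sums (Arctan (1 + w) - of_real pi / 4)" unfolding a_def by (rule series_a[OF w])
  have sb: "b sums (1 / (1 + w))" unfolding b_def using geometric_sums[of "-w"] w by simp
  have na: "summable (\<lambda>n. norm (a n))"
  proof (rule summable_comparison_test)
    show "\<exists>N. \<forall>n\<ge>N. norm (norm (a n)) \<le> norm w ^ n"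
    proof (intro exI allI impI)
      fix n
      have "norm (a n) = \<bar>tt n\<bar> * norm w ^ n" by (simp add: a_def norm_mult norm_power)
      also have "\<dots> \<le> 1 * norm w ^ n" by (intro mult_right_mono tt_bound) simp
      finally show "norm (norm (a n)) \<le> norm w ^ n" by simp
    qed
    show "summable (\<lambda>n. norm w ^ n)" using w by (simp add: summable_geometric)
  qed
  have nb: "summable (\<lambda>n. norm (b n))" unfolding b_def using w by (simp add: norm_power summable_geometric)
  have cp: "(\<lambda>k. \<Sum>i\<le>k. a i * b (k - i)) sums ((\<Sum>k. a k) * (\<Sum>k. b k))"
    by (rule Cauchy_product_sums[OF na nb])
  have eq: "(\<Sum>i\<le>k. a i * b (k - i)) = (-1)^k * complex_of_real (T k) * w^k" for k
  proof -
    have "(\<Sum>i\<le>k. a i * b (k - i)) = (\<Sum>i\<le>k. (-1)^k * w^k * complex_of_real (tt i))"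
    proof (rule sum.cong)
      fix i assume "i \<in> {..k}"
      hence ik: "i \<le> k" by simp
      have p1: "(-1::complex)^i * (-1)^(k-i) = (-1)^k" using ik by (simp add: power_add[symmetric])
      have p2: "w^i * w^(k-i) = w^k" using ik by (simp add: power_add[symmetric])
      have "a i * b (k - i) = ((-1)^i * (-1)^(k-i)) * (w^i * w^(k-i)) * complex_of_real (tt i)"
        by (simp add: a_def b_def power_minus' power_mult_distrib algebra_simps)
      thus "a i * b (k - i) = (-1)^k * w^k * complex_of_real (tt i)" unfolding p1 p2 .
    qed simp
    also have "\<dots> = (-1)^k * complex_of_real (T k) * w^k"
      by (simp add: T_eq sum_distrib_left algebra_simps)
    finally show ?thesis .
  qed
  have "(\<lambda>k. (-1)^k * complex_of_real (T k) * w^k) sums ((Arctan z - of_real pi / 4) / z)"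
    using cp unfolding eq sums_unique[OF sa, symmetric] sums_unique[OF sb, symmetric] z by simp
  hence "(\<lambda>k. (-1)^(Suc k) * complex_of_real (T (Suc k)) * w^(Suc k)) sums ((Arctan z - of_real pi / 4) / z)"
    by (subst sums_Suc_iff) (simp add: T_def)
  thus ?thesis by (simp add: w_def)
qed

end
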